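(* Let $A$ be a vector bundle over $M$, $P\in\Gamma(A^\vee\otimes A)$ any $(1,1)$-form, and $X$ a vector field of degree $b-1$ on $A[1]$. Then the map $\Phi(X):\Gamma(A)^{\times b}\to\Gamma(A)$, $\Phi(X)(E_1,\dots,E_b)=\sum_{k=0}^b\sum_{1\le i_1<\dots<i_k\le b}(-1)^{b-k}P^{b-k}B_X(E_1,\dots,PE_{i_1},\dots,PE_{i_k},\dots,E_b)$ ($P$ applied exactly in positions $i_1,\dots,i_k$) is alternating and $C^\infty(M)$-multilinear, i.e. $\Phi(X)\in\Gamma(\wedge^bA^\vee\otimes A)$.
   Context: $A[1]$ is the graded manifold with function algebra $\Gamma(\wedge^\bullet A^\vee)$; a vector field of degree $d$ on $A[1]$ is a graded derivation of degree $d$ of $\Gamma(\wedge^\bullet A^\vee)$. For $X$ of degree $b-1$, $a_X:C^\infty(M)\to\Gamma(\wedge^{b-1}A^\vee)$ and $\partial_X:\Gamma(A^\vee)\to\Gamma(\wedge^bA^\vee)$ are the restrictions of $X$. With $\langle\eta,X_1\wedge\cdots\wedge X_p\rangle=\eta(X_1,\dots,X_p)$, $B_X:\Gamma(A)^{\times b}\to\Gamma(A)$ is defined by $\langle W,B_X(E_1,\dots,E_b)\rangle=(-1)^{b-1}\big(\langle\partial_XW,E_1\wedge\cdots\wedge E_b\rangle-\sum_{i=1}^b(-1)^{b-i}\langle a_X\langle W,E_i\rangle,E_1\wedge\cdots\wedge\widehat{E_i}\wedge\cdots\wedge E_b\rangle\big)$ for all $W\in\Gamma(A^\vee)$. $P$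 is viewed as a $C^\infty(M)$-linear endomorphism of $\Gamma(A)$. *)

theory Defs
  imports Complex_Main
begin

(* Algebraic (Serre--Swan) model: the ring C^\<infinity>(M) is an arbitrary commutative
   real algebra 'r; \<Gamma>(A) is an 'r-module 'a (scalar multiplication sA). *)

definition multilinear_map ::
  "('r::comm_ring_1 \<Rightarrow> 'a::ab_group_add \<Rightarrow> 'a) \<Rightarrow> ('r \<Rightarrow> 'b::ab_group_add \<Rightarrow> 'b)
     \<Rightarrow> nat \<Rightarrow> ('a list \<Rightarrow> 'b) \<Rightarrow> bool" where
  "multilinear_map sA sB p f \<longleftrightarrow>
     (\<forall>xs k x y. length xs = p \<and> k < p \<longrightarrow>
        f (xs[k := x + y]) = f (xs[k := x]) + f (xs[k := y])) \<and>
     (\<forall>xs k r x. length xs = p \<and> k < p \<longrightarrow>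
        f (xs[k := sA r x]) = sB r (f (xs[k := x])))"

definition alternating_map :: "nat \<Rightarrow> ('a list \<Rightarrow> 'b::zero) \<Rightarrow> bool" where
  "alternating_map p f \<longleftrightarrow>
     (\<forall>xs i j. length xs = p \<and> i < j \<and> j < p \<and> xs ! i = xs ! j \<longrightarrow> f xs = 0)"

(* Sections of the p-th exterior power of the dual: alternating 'r-multilinear
  p-forms on \<Gamma>(A); represented as functions on lists, zero off length p. *)
definition alt_forms ::
  "('r::comm_ring_1 \<Rightarrow> 'a::ab_group_add \<Rightarrow> 'a) \<Rightarrow> nat \<Rightarrow> ('a list \<Rightarrow> 'r) set" where
  "alt_forms sA p = {\<omega>. (\<forall>xs. length xs \<noteq> p \<longrightarrow> \<omega> xs = 0) \<and>
       multilinear_map sA (*) p \<omega> \<and> alternating_map p \<omega>}"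

(* Sign of the (p,q)-shuffle whose first block occupies the positions S. *)
definition shuffle_sign :: "nat \<Rightarrow> nat set \<Rightarrow> 'r::comm_ring_1" where
  "shuffle_sign n S = (- 1) ^ card {(i, j). i \<in> S \<and> j \<in> {0..<n} - S \<and> j < i}"

definition wedge :: "nat \<Rightarrow> nat \<Rightarrow> ('a list \<Rightarrow> 'r::comm_ring_1) \<Rightarrow> ('a list \<Rightarrow> 'r)
                      \<Rightarrow> 'a list \<Rightarrow> 'r" where
  "wedge p q \<alpha> \<beta> = (\<lambda>xs. if length xs = p + q then
      (\<Sum>S\<in>{S. S \<subseteq> {0..<p+q} \<and> card S = p}.
         shuffle_sign (p+q) S * \<alpha> (nths xs S) * \<beta> (nths xs ({0..<p+q} - S)))
      else 0)"

(* Vector field of (integer) degree d on A[1]: a graded derivation of degree d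
  of \<Gamma>(\<wedge>^\<bullet> A^\<vee>), given by its homogeneous components D p :
  \<Gamma>(\<wedge>^p A^\<vee>) \<rightarrow> \<Gamma>(\<wedge>^p^+^d A^\<vee>) (zero when p + d < 0);
  real-linear, with the graded Leibniz rule. *)
definition vector_field ::
  "('r::{comm_ring_1,real_algebra_1} \<Rightarrow> 'a::ab_group_add \<Rightarrow> 'a) \<Rightarrow> int
     \<Rightarrow> (nat \<Rightarrow> ('a list \<Rightarrow> 'r) \<Rightarrow> ('a list \<Rightarrow> 'r)) \<Rightarrow> bool" where
  "vector_field sA d D \<longleftrightarrow>
     (\<forall>p \<omega>. \<omega> \<in> alt_forms sA p \<longrightarrow>
        (if int p + d \<ge> 0 then D p \<omega> \<in> alt_forms sA (nat (int p + d))
         else D p \<omega> = (\<lambda>_. 0))) \<and>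
     (\<forall>p \<alpha> \<beta>. \<alpha> \<in> alt_forms sA p \<and> \<beta> \<in> alt_forms sA p \<longrightarrow>
        D p (\<lambda>xs. \<alpha> xs + \<beta> xs) = (\<lambda>xs. D p \<alpha> xs + D p \<beta> xs)) \<and>
     (\<forall>p c \<alpha>. \<alpha> \<in> alt_forms sA p \<longrightarrow>
        D p (\<lambda>xs. c *\<^sub>R \<alpha> xs) = (\<lambda>xs. c *\<^sub>R D p \<alpha> xs)) \<and>
     (\<forall>p q \<alpha> \<beta>. \<alpha> \<in> alt_forms sA p \<and> \<beta> \<in> alt_forms sA q \<longrightarrow>
        D (p + q) (wedge p q \<alpha> \<beta>) =
          (\<lambda>xs. wedge (nat (int p + d)) q (D p \<alpha>) \<beta> xs
               + (- 1) ^ (nat \<bar>d\<bar> * p) * wedge p (nat (int q + d)) \<alpha> (D q \<beta>) xs))"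

(* \<Gamma>(A) is the module of sections of a vector bundle: finitely generated
  projective (dual basis lemma). *)
definition fg_projective ::
  "('r::comm_ring_1 \<Rightarrow> 'a::ab_group_add \<Rightarrow> 'a) \<Rightarrow> bool" where
  "fg_projective sA \<longleftrightarrow> (\<exists>(n::nat) (e::nat \<Rightarrow> 'a) (\<theta>::nat \<Rightarrow> 'a list \<Rightarrow> 'r).
      (\<forall>j<n. \<theta> j \<in> alt_forms sA 1) \<and> (\<forall>E. E = (\<Sum>j<n. sA (\<theta> j [E]) (e j))))"

(* Functions on C^\<infinity>(M) viewed as 0-forms. *)
definition const0 :: "'r::zero \<Rightarrow> 'a list \<Rightarrow> 'r" where
  "const0 f = (\<lambda>xs. if xs = [] then f else 0)"

(* B_X for X of degree b-1 (0-indexed positions; a_X f = D 0 (const0 f),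
  \<partial>_X W = D 1 W). *)
definition B_X ::
  "('r::{comm_ring_1,real_algebra_1} \<Rightarrow> 'a::ab_group_add \<Rightarrow> 'a)
     \<Rightarrow> (nat \<Rightarrow> ('a list \<Rightarrow> 'r) \<Rightarrow> ('a list \<Rightarrow> 'r)) \<Rightarrow> nat \<Rightarrow> 'a list \<Rightarrow> 'a" where
  "B_X sA D b Es = (THE B. \<forall>W \<in> alt_forms sA 1.
      W [B] = (- 1) ^ (b + 1) *
        (D 1 W Es - (\<Sum>i<b. (- 1) ^ (b - Suc i) *
             D 0 (const0 (W [Es ! i])) (take i Es @ drop (Suc i) Es))))"

definition Phi ::
  "('r::{comm_ring_1,real_algebra_1} \<Rightarrow> 'a::ab_group_add \<Rightarrow> 'a) \<Rightarrow> ('a \<Rightarrow> 'a)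
     \<Rightarrow> (nat \<Rightarrow> ('a list \<Rightarrow> 'r) \<Rightarrow> ('a list \<Rightarrow> 'r)) \<Rightarrow> nat \<Rightarrow> 'a list \<Rightarrow> 'a" where
  "Phi sA P D b Es = (\<Sum>I\<in>Pow {0..<b}.
      sA ((- 1) ^ (b - card I))
         ((P ^^ (b - card I)) (B_X sA D b (map (\<lambda>k. if k \<in> I then P (Es ! k) else Es ! k) [0..<b]))))"

end

theory Submission
  imports Defs
begin

abbreviation dl :: "nat \<Rightarrow> 'x list \<Rightarrow> 'x list" where
  "dl i xs \<equiv> take i xs @ drop (Suc i) xs"

lemma length_dl: "i < length xs \<Longrightarrow> length (dl i xs) = length xs - 1"
  by simp

lemma nth_dl: "i < length xs \<Longrightarrow> m < length xs - 1 \<Longrightarrow>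
   dl i xs ! m = xs ! (if m < i then m else Suc m)"
  by (auto simp: nth_append min_def)

lemma dl_update_same: "dl k (xs[k:=z]) = dl k xs"
  by simp

lemma dl_update_other:
  assumes "i \<noteq> k" "k < length xs" "i < length xs"
  shows "dl i (xs[k:=z]) = (dl i xs)[(if k < i then k else k - 1) := z]"
proof (rule nth_equalityI)
  show "length (dl i (xs[k:=z])) = length ((dl i xs)[(if k < i then k else k - 1) := z])"
    using assms by simp
  fix m assume "m < length (dl i (xs[k:=z]))"
  hence m: "m < length xs - 1" using assms by simp
  show "dl i (xs[k:=z]) ! m = (dl i xs)[(if k < i then k else k - 1) := z] ! m"
    using assms m by (auto simp: nth_list_update nth_dl)
qed

lemma nths_single: "i < length xs \<Longrightarrow> nths xs {i} = [xs ! i]"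
proof (induction xs arbitrary: i)
  case Nil thus ?case by simp
next
  case (Cons x l)
  show ?case
  proof (cases i)
    case 0
    have "{j. Suc j \<in> {i}} = {}" using 0 by auto
    thus ?thesis using 0 by (simp add: nths_Cons)
  next
    case (Suc i')
    have "{j. Suc j \<in> {i}} = {i'}" using Suc by auto
    thus ?thesis using Suc Cons by (simp add: nths_Cons)
  qed
qed

lemma nths_minus1: "i < length xs \<Longrightarrow> nths xs ({0..<length xs} - {i}) = dl i xs"
proof (induction xs arbitrary: i)
  case Nil thus ?case by simp
next
  case (Cons x l)
  show ?case
  proof (cases i)
    case 0
    have "{j. Suc j \<in> {0..<length (x # l)} - {i}} = {0..<length l}" using 0 by auto
    moreover have "nths l {0..<length l} = l" by (rule nths_all) auto
    ultimately show ?thesis using 0 by (simp add: nths_Cons)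
  next
    case (Suc i')
    have "{j. Suc j \<in> {0..<length (x # l)} - {i}} = {0..<length l} - {i'}" using Suc by auto
    thus ?thesis using Suc Cons by (simp add: nths_Cons)
  qed
qed

lemma nths_upto_len: "length xs = n \<Longrightarrow> nths xs {0..<n} = xs"
  by (rule nths_all) auto

lemma wedge_p0:
  fixes \<alpha> :: "'a list \<Rightarrow> 'r::comm_ring_1"
  assumes "length xs = p"
  shows "wedge p 0 \<alpha> (const0 g) xs = \<alpha> xs * g"
proof -
  have S: "{S. S \<subseteq> {0..<p} \<and> card S = p} = {{0..<p}}"
  proof (intro set_eqI iffI)
    fix S assume "S \<in> {S. S \<subseteq> {0..<p} \<and> card S = p}"
    hence "S \<subseteq> {0..<p}" "card S = card {0..<p}" by auto
    hence "S = {0..<p}" by (simp add: card_subset_eq)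
    thus "S \<in> {{0..<p}}" by simp
  qed auto
  have sg: "shuffle_sign p {0..<p} = (1::'r)"
    unfolding shuffle_sign_def by simp
  show ?thesis using assms unfolding wedge_def
    by (simp add: S sg nths_upto_len const0_def)
qed

lemma wedge_0q:
  fixes \<beta> :: "'a list \<Rightarrow> 'r::comm_ring_1"
  assumes "length xs = q"
  shows "wedge 0 q (const0 f) \<beta> xs = f * \<beta> xs"
proof -
  have S: "{S. S \<subseteq> {0..<q} \<and> card S = 0} = {{}}"
  proof (intro set_eqI iffI)
    fix S assume "S \<in> {S. S \<subseteq> {0..<q} \<and> card S = 0}"
    hence "finite S" "card S = 0" using finite_subset by auto
    thus "S \<in> {{}}" by simp
  qed auto
  have sg: "shuffle_sign q {} = (1::'r)"
    unfolding shuffle_sign_def by simp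
  show ?thesis using assms unfolding wedge_def
    by (simp add: S sg nths_upto_len const0_def)
qed

lemma wedge_00: "wedge 0 0 (const0 f) (const0 g) = const0 (f * (g::'r::comm_ring_1))"
proof
  fix xs :: "'a list"
  show "wedge 0 0 (const0 f) (const0 g) xs = const0 (f * g) xs"
  proof (cases "xs = []")
    case True thus ?thesis using wedge_0q[of xs 0 f "const0 g"] by (simp add: const0_def)
  next
    case False thus ?thesis by (simp add: wedge_def const0_def)
  qed
qed

lemma wedge_01:
  fixes W :: "'a list \<Rightarrow> 'r::comm_ring_1"
  assumes "\<forall>xs. length xs \<noteq> 1 \<longrightarrow> W xs = 0"
  shows "wedge 0 1 (const0 f) W = (\<lambda>xs. f * W xs)"
proof
  fix xs :: "'a list"
  show "wedge 0 1 (const0 f) W xs = f * W xs"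
  proof (cases "length xs = 1")
    case True thus ?thesis using wedge_0q[of xs 1 f W] by simp
  next
    case False thus ?thesis using assms by (simp add: wedge_def)
  qed
qed

lemma wedge_n1:
  fixes \<alpha> \<beta> :: "'a list \<Rightarrow> 'r::comm_ring_1"
  assumes "length xs = b"
  shows "wedge (b - 1) 1 \<alpha> \<beta> xs =
     (\<Sum>i<b. (- 1) ^ (b - Suc i) * \<alpha> (dl i xs) * \<beta> [xs ! i])"
proof (cases "b = 0")
  case True thus ?thesis using assms by (simp add: wedge_def)
next
  case False
  hence bb: "b - 1 + 1 = b" by simp
  have S: "{S. S \<subseteq> {0..<b} \<and> card S = b - 1} = (\<lambda>i. {0..<b} - {i}) ` {..<b}"
  proof (intro set_eqI iffI)
    fix S assume "S \<in> {S. S \<subseteq> {0..<b} \<and> card S = b - 1}"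
    hence S1: "S \<subseteq> {0..<b}" and S2: "card S = b - 1" by auto
    have "S \<noteq> {0..<b}" using S2 False by auto
    hence "\<not> {0..<b} \<subseteq> S" using S1 by auto
    then obtain i where i: "i < b" "i \<notin> S" by (force simp: subset_iff)
    have "S \<subseteq> {0..<b} - {i}" using S1 i by auto
    moreover have "card S = card ({0..<b} - {i})" using S2 i by simp
    ultimately have "S = {0..<b} - {i}" by (simp add: card_subset_eq)
    thus "S \<in> (\<lambda>i. {0..<b} - {i}) ` {..<b}" using i by auto
  next
    fix S assume "S \<in> (\<lambda>i. {0..<b} - {i}) ` {..<b}"
    then obtain i where "i < b" "S = {0..<b} - {i}" by auto
    thus "S \<in> {S. S \<subseteq> {0..<b} \<and> card S = b - 1}" by auto
  qed
  have inj: "inj_on (\<lambda>i. {0..<b} - {i}) {..<b}"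
  proof (rule inj_onI)
    fix i j assume ij: "i \<in> {..<b}" "j \<in> {..<b}" "{0..<b} - {i} = {0..<b} - {j}"
    have "i \<notin> {0..<b} - {i}" by simp
    hence "i \<notin> {0..<b} - {j}" using ij(3) by simp
    thus "i = j" using ij(1) by auto
  qed
  have sg: "shuffle_sign b ({0..<b} - {i}) = ((- 1) ^ (b - Suc i) :: 'r)" if "i < b" for i
  proof -
    have "{(i', j). i' \<in> {0..<b} - {i} \<and> j \<in> {0..<b} - ({0..<b} - {i}) \<and> j < i'}
          = (\<lambda>i'. (i', i)) ` {Suc i..<b}" using that by auto
    moreover have "card ((\<lambda>i'. (i', i)) ` {Suc i..<b}) = b - Suc i"
      by (subst card_image) (auto intro: inj_onI)
    ultimately show ?thesis unfolding shuffle_sign_def by simp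
  qed
  have c: "{0..<b} - ({0..<b} - {i}) = {i}" if "i < b" for i using that by auto
  have "wedge (b - 1) 1 \<alpha> \<beta> xs = (\<Sum>S\<in>{S. S \<subseteq> {0..<b} \<and> card S = b - 1}.
      shuffle_sign b S * \<alpha> (nths xs S) * \<beta> (nths xs ({0..<b} - S)))"
    unfolding wedge_def using assms bb by simp
  also have "\<dots> = (\<Sum>i\<in>{..<b}. shuffle_sign b ({0..<b} - {i}) * \<alpha> (nths xs ({0..<b} - {i}))
      * \<beta> (nths xs ({0..<b} - ({0..<b} - {i}))))"
    unfolding S sum.reindex[OF inj] comp_def by (rule refl)
  also have "\<dots> = (\<Sum>i<b. (- 1) ^ (b - Suc i) * \<alpha> (dl i xs) * \<beta> [xs ! i])"
    by (rule sum.cong) (use assms in \<open>simp_all add: sg c nths_single nths_minus1[of _ xs, unfolded assms]\<close>)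
  finally show ?thesis .
qed

lemma swap_anti:
  fixes f :: "'x::plus list \<Rightarrow> 'y::ab_group_add"
  assumes add: "\<And>xs k x y. length xs = n \<Longrightarrow> k < n \<Longrightarrow>
      f (xs[k := x + y]) = f (xs[k := x]) + f (xs[k := y])"
    and alt: "alternating_map n f" and len: "length xs = n" and ij: "i < j" "j < n"
  shows "f (xs[i := x, j := y]) = - f (xs[i := y, j := x])"
proof -
  define g where "g u v = f (xs[i := u, j := v])" for u v
  have gu: "g (u + u') v = g u v + g u' v" for u u' v
  proof -
    have "xs[i := w, j := v] = (xs[j := v])[i := w]" for w
      using ij by (simp add: list_update_swap)
    thus ?thesis unfolding g_def using add[of "xs[j := v]" i u u'] len ij by simp
  qed
  have gv: "g u (v + v') = g u v + g u v'" for u v v'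
    unfolding g_def using add[of "xs[i := u]" j v v'] len ij by simp
  have g0: "g u u = 0" for u
  proof -
    have "length (xs[i:=u, j:=u]) = n" "xs[i:=u, j:=u] ! i = xs[i:=u, j:=u] ! j"
      using len ij by (auto simp: nth_list_update)
    thus ?thesis unfolding g_def using alt ij unfolding alternating_map_def by blast
  qed
  have "0 = g (x + y) (x + y)" by (simp add: g0)
  also have "\<dots> = g x x + g x y + (g y x + g y y)" by (simp add: gu gv)
  also have "\<dots> = g x y + g y x" by (simp add: g0)
  finally show ?thesis unfolding g_def by (simp add: eq_neg_iff_add_eq_0)
qed

lemma shift_anti:
  fixes f :: "'x::plus list \<Rightarrow> 'y::comm_ring_1"
  assumes add: "\<And>xs k x y. length xs = n \<Longrightarrow> k < n \<Longrightarrow>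
      f (xs[k := x + y]) = f (xs[k := x]) + f (xs[k := y])"
    and alt: "alternating_map n f"
  shows "length (xs @ a # ys @ zs) = n \<Longrightarrow>
    f (xs @ a # ys @ zs) = (- 1) ^ length ys * f (xs @ ys @ a # zs)"
proof (induction ys arbitrary: xs)
  case Nil thus ?case by simp
next
  case (Cons y ys)
  let ?L = "xs @ a # y # ys @ zs"
  have "f (?L[length xs := a, Suc (length xs) := y]) = - f (?L[length xs := y, Suc (length xs) := a])"
    by (rule swap_anti[OF add alt]) (use Cons.prems in auto)
  moreover have "?L[length xs := a, Suc (length xs) := y] = ?L"
    by (simp add: list_update_append)
  moreover have "?L[length xs := y, Suc (length xs) := a] = (xs @ [y]) @ a # ys @ zs"
    by (simp add: list_update_append)
  ultimately have "f ?L = - f ((xs @ [y]) @ a # ys @ zs)" by simp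
  also have "\<dots> = - ((- 1) ^ length ys * f ((xs @ [y]) @ ys @ a # zs))"
    using Cons.IH[of "xs @ [y]"] Cons.prems by simp
  finally show ?case by simp
qed

lemma form_zero_off: "\<omega> \<in> alt_forms sA p \<Longrightarrow> length xs \<noteq> p \<Longrightarrow> \<omega> xs = 0"
  unfolding alt_forms_def by auto

lemma form_add: "\<omega> \<in> alt_forms sA p \<Longrightarrow> length xs = p \<Longrightarrow> k < p \<Longrightarrow>
    \<omega> (xs[k := x + y]) = \<omega> (xs[k := x]) + \<omega> (xs[k := y])"
  unfolding alt_forms_def multilinear_map_def by auto

lemma form_scale: "\<omega> \<in> alt_forms sA p \<Longrightarrow> length xs = p \<Longrightarrow> k < p \<Longrightarrow>
    \<omega> (xs[k := sA r x]) = r * \<omega> (xs[k := x])"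
  unfolding alt_forms_def multilinear_map_def by auto

lemma form_alt: "\<omega> \<in> alt_forms sA p \<Longrightarrow> alternating_map p \<omega>"
  unfolding alt_forms_def by auto

lemma form1_add: "W \<in> alt_forms sA 1 \<Longrightarrow> W [x + y] = W [x] + W [y]"
  using form_add[of W sA 1 "[x]" 0 x y] by simp

lemma form1_scale: "W \<in> alt_forms sA 1 \<Longrightarrow> W [sA r x] = r * W [x]"
  using form_scale[of W sA 1 "[x]" 0 r x] by simp

lemma form1_zero: "W \<in> alt_forms sA 1 \<Longrightarrow> W [0] = 0"
  using form1_add[of W sA 0 0] by simp

lemma form1_sum: "W \<in> alt_forms sA 1 \<Longrightarrow> W [sum g A] = (\<Sum>a\<in>A. W [g a])"
  by (induction A rule: infinite_finite_induct) (simp_all add: form1_zero form1_add)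

lemma const0_in: "const0 f \<in> alt_forms sA 0"
  unfolding alt_forms_def multilinear_map_def alternating_map_def const0_def by auto

lemma zero_in: "(\<lambda>_. 0) \<in> alt_forms sA p"
  unfolding alt_forms_def multilinear_map_def alternating_map_def by auto

lemma smult_in: "W \<in> alt_forms sA p \<Longrightarrow> (\<lambda>xs. f * W xs) \<in> alt_forms sA p"
  unfolding alt_forms_def multilinear_map_def alternating_map_def
  by (auto simp: algebra_simps)

lemma add_in: "V \<in> alt_forms sA p \<Longrightarrow> W \<in> alt_forms sA p \<Longrightarrow> (\<lambda>xs. V xs + W xs) \<in> alt_forms sA p"
  unfolding alt_forms_def multilinear_map_def alternating_map_def
  by (auto simp: algebra_simps)

lemma sum_in: "(\<And>j. j < (n::nat) \<Longrightarrow> \<theta> j \<in> alt_forms sA p) \<Longrightarrow>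
    (\<lambda>xs. \<Sum>j<n. c j * \<theta> j xs) \<in> alt_forms sA p"
proof (induction n)
  case 0 thus ?case using zero_in by simp
next
  case (Suc n)
  have "(\<lambda>xs. (\<Sum>j<n. c j * \<theta> j xs) + c n * \<theta> n xs) \<in> alt_forms sA p"
    by (rule add_in) (use Suc in \<open>auto intro: smult_in\<close>)
  thus ?case by simp
qed

lemma const0_add: "const0 (u + (v::'r::comm_ring_1)) = (\<lambda>xs. const0 u xs + const0 v xs)"
  unfolding const0_def by (auto simp: fun_eq_iff)

lemma nat_b1: "nat (int b - 1) = b - 1"
  by (cases b) auto

locale VF =
  fixes sA :: "'r::{comm_ring_1,real_algebra_1} \<Rightarrow> 'a::ab_group_add \<Rightarrow> 'a"
    and P :: "'a \<Rightarrow> 'a"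
    and D :: "nat \<Rightarrow> ('a list \<Rightarrow> 'r) \<Rightarrow> ('a list \<Rightarrow> 'r)"
    and b :: nat
  assumes md: "module sA" and fgp: "fg_projective sA"
    and hom: "module_hom sA sA P" and vf: "vector_field sA (int b - 1) D"
begin

lemma D1_in: "W \<in> alt_forms sA 1 \<Longrightarrow> D 1 W \<in> alt_forms sA b"
proof -
  assume W: "W \<in> alt_forms sA 1"
  have "if int 1 + (int b - 1) \<ge> 0 then D 1 W \<in> alt_forms sA (nat (int 1 + (int b - 1)))
         else D 1 W = (\<lambda>_. 0)"
    using vf W unfolding vector_field_def by blast
  thus ?thesis by simp
qed

lemma D0_in: "\<omega> \<in> alt_forms sA 0 \<Longrightarrow> 0 < b \<Longrightarrow> D 0 \<omega> \<in> alt_forms sA (b - 1)"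
proof -
  assume W: "\<omega> \<in> alt_forms sA 0" and b: "0 < b"
  have "if int 0 + (int b - 1) \<ge> 0 then D 0 \<omega> \<in> alt_forms sA (nat (int 0 + (int b - 1)))
         else D 0 \<omega> = (\<lambda>_. 0)"
    using vf W unfolding vector_field_def by blast
  thus ?thesis using b by (simp add: nat_b1)
qed

lemma D_add: "\<alpha> \<in> alt_forms sA p \<Longrightarrow> \<beta> \<in> alt_forms sA p \<Longrightarrow>
    D p (\<lambda>xs. \<alpha> xs + \<beta> xs) = (\<lambda>xs. D p \<alpha> xs + D p \<beta> xs)"
  using vf unfolding vector_field_def by blast

lemma Leib: "\<alpha> \<in> alt_forms sA p \<Longrightarrow> \<beta> \<in> alt_forms sA q \<Longrightarrow>
    D (p + q) (wedge p q \<alpha> \<beta>) =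
      (\<lambda>xs. wedge (nat (int p + (int b - 1))) q (D p \<alpha>) \<beta> xs
        + (- 1) ^ (nat \<bar>int b - 1\<bar> * p) * wedge p (nat (int q + (int b - 1))) \<alpha> (D q \<beta>) xs)"
  using vf unfolding vector_field_def by blast

lemma D1_smult:
  assumes W: "W \<in> alt_forms sA 1" and len: "length Es = b"
  shows "D 1 (\<lambda>xs. f * W xs) Es = f * D 1 W Es
      + (\<Sum>i<b. (- 1) ^ (b - Suc i) * D 0 (const0 f) (dl i Es) * W [Es ! i])"
proof -
  have L: "D (0 + 1) (wedge 0 1 (const0 f) W) =
      (\<lambda>xs. wedge (nat (int 0 + (int b - 1))) 1 (D 0 (const0 f)) W xs
        + (- 1) ^ (nat \<bar>int b - 1\<bar> * 0) * wedge 0 (nat (int 1 + (int b - 1))) (const0 f) (D 1 W) xs)"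
    by (rule Leib[OF const0_in W])
  have w: "wedge 0 1 (const0 f) W = (\<lambda>xs. f * W xs)"
    by (rule wedge_01) (use W in \<open>auto simp: alt_forms_def\<close>)
  have "D 1 (\<lambda>xs. f * W xs) Es = wedge (b - 1) 1 (D 0 (const0 f)) W Es
        + wedge 0 b (const0 f) (D 1 W) Es"
    using L unfolding w by (simp add: nat_b1)
  also have "\<dots> = (\<Sum>i<b. (- 1) ^ (b - Suc i) * D 0 (const0 f) (dl i Es) * W [Es ! i])
       + f * D 1 W Es"
    unfolding wedge_n1[OF len] wedge_0q[OF len] ..
  finally show ?thesis by (simp add: add.commute)
qed

lemma D0_prod:
  assumes len: "length L = b - 1"
  shows "D 0 (const0 (f * g)) L = D 0 (const0 f) L * g + f * D 0 (const0 g) L"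
proof -
  have L: "D (0 + 0) (wedge 0 0 (const0 f) (const0 g)) =
      (\<lambda>xs. wedge (nat (int 0 + (int b - 1))) 0 (D 0 (const0 f)) (const0 g) xs
        + (- 1) ^ (nat \<bar>int b - 1\<bar> * 0) * wedge 0 (nat (int 0 + (int b - 1))) (const0 f) (D 0 (const0 g)) xs)"
    by (rule Leib[OF const0_in const0_in])
  have "D 0 (const0 (f * g)) L = wedge (b - 1) 0 (D 0 (const0 f)) (const0 g) L
        + wedge 0 (b - 1) (const0 f) (D 0 (const0 g)) L"
    using L unfolding wedge_00 by (simp add: nat_b1)
  also have "\<dots> = D 0 (const0 f) L * g + f * D 0 (const0 g) L"
    unfolding wedge_p0[OF len] wedge_0q[OF len] ..
  finally show ?thesis .
qed

definition R :: "('a list \<Rightarrow> 'r) \<Rightarrow> 'a list \<Rightarrow> 'r" where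
  "R W Es = (- 1) ^ (b + 1) *
        (D 1 W Es - (\<Sum>i<b. (- 1) ^ (b - Suc i) *
             D 0 (const0 (W [Es ! i])) (take i Es @ drop (Suc i) Es)))"

lemma R_add:
  assumes V: "V \<in> alt_forms sA 1" and W: "W \<in> alt_forms sA 1"
  shows "R (\<lambda>xs. V xs + W xs) Es = R V Es + R W Es"
proof -
  have a: "D 0 (const0 (V [Es ! i] + W [Es ! i])) (dl i Es) =
      D 0 (const0 (V [Es ! i])) (dl i Es) + D 0 (const0 (W [Es ! i])) (dl i Es)" for i
    unfolding const0_add D_add[OF const0_in const0_in] by simp
  show ?thesis unfolding R_def D_add[OF V W] a
    by (simp add: sum.distrib algebra_simps)
qed

lemma R_smult:
  assumes W: "W \<in> alt_forms sA 1" and len: "length Es = b"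
  shows "R (\<lambda>xs. f * W xs) Es = f * R W Es"
proof -
  have a: "(\<Sum>i<b. (- 1) ^ (b - Suc i) * D 0 (const0 (f * W [Es ! i])) (dl i Es))
     = (\<Sum>i<b. (- 1) ^ (b - Suc i) * D 0 (const0 f) (dl i Es) * W [Es ! i])
       + f * (\<Sum>i<b. (- 1) ^ (b - Suc i) * D 0 (const0 (W [Es ! i])) (dl i Es))"
  proof -
    have "(\<Sum>i<b. (- 1) ^ (b - Suc i) * D 0 (const0 (f * W [Es ! i])) (dl i Es))
       = (\<Sum>i<b. (- 1) ^ (b - Suc i) * D 0 (const0 f) (dl i Es) * W [Es ! i]
          + f * ((- 1) ^ (b - Suc i) * D 0 (const0 (W [Es ! i])) (dl i Es)))"
    proof (rule sum.cong)
      fix i assume "i \<in> {..<b}"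
      hence "length (dl i Es) = b - 1" using len by simp
      thus "(- 1) ^ (b - Suc i) * D 0 (const0 (f * W [Es ! i])) (dl i Es)
         = (- 1) ^ (b - Suc i) * D 0 (const0 f) (dl i Es) * W [Es ! i]
          + f * ((- 1) ^ (b - Suc i) * D 0 (const0 (W [Es ! i])) (dl i Es))"
        by (simp add: D0_prod algebra_simps)
    qed simp
    thus ?thesis by (simp add: sum.distrib sum_distrib_left)
  qed
  show ?thesis unfolding R_def D1_smult[OF W len] a
    by (simp add: algebra_simps)
qed

lemma R_zero: "length Es = b \<Longrightarrow> R (\<lambda>xs. 0) Es = 0"
  using R_smult[OF zero_in, of Es 0] by simp

lemma R_sum:
  assumes th: "\<And>j. j < n \<Longrightarrow> \<theta> j \<in> alt_forms sA 1" and len: "length Es = b"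
  shows "R (\<lambda>xs. \<Sum>j<(n::nat). c j * \<theta> j xs) Es = (\<Sum>j<n. c j * R (\<theta> j) Es)"
  using th
proof (induction n)
  case 0 thus ?case using R_zero[OF len] by simp
next
  case (Suc n)
  have "R (\<lambda>xs. \<Sum>j<Suc n. c j * \<theta> j xs) Es
      = R (\<lambda>xs. (\<Sum>j<n. c j * \<theta> j xs) + c n * \<theta> n xs) Es" by simp
  also have "\<dots> = R (\<lambda>xs. \<Sum>j<n. c j * \<theta> j xs) Es + R (\<lambda>xs. c n * \<theta> n xs) Es"
    by (rule R_add) (use Suc.prems in \<open>auto intro: sum_in smult_in\<close>)
  also have "\<dots> = (\<Sum>j<Suc n. c j * R (\<theta> j) Es)"
    using Suc by (simp add: R_smult len)
  finally show ?case .
qed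

lemma ext1:
  assumes "\<forall>W\<in>alt_forms sA 1. W [B] = W [B']"
  shows "B = B'"
proof -
  obtain n e \<theta> where th: "\<forall>j<(n::nat). \<theta> j \<in> alt_forms sA 1"
    and ex: "\<forall>E. E = (\<Sum>j<n. sA (\<theta> j [E]) (e j))"
    using fgp unfolding fg_projective_def by blast
  have "B = (\<Sum>j<n. sA (\<theta> j [B]) (e j))" using ex by blast
  also have "\<dots> = (\<Sum>j<n. sA (\<theta> j [B']) (e j))"
  proof (rule sum.cong)
    fix j assume "j \<in> {..<n}"
    hence "\<theta> j \<in> alt_forms sA 1" using th by simp
    hence "\<theta> j [B] = \<theta> j [B']" using assms by blast
    thus "sA (\<theta> j [B]) (e j) = sA (\<theta> j [B']) (e j)" by simp
  qed simp
  also have "\<dots> = B'" using ex by metis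
  finally show ?thesis .
qed

lemma BX_char:
  assumes len: "length Es = b"
  shows "\<forall>W\<in>alt_forms sA 1. W [B_X sA D b Es] = R W Es"
proof -
  obtain n e \<theta> where th: "\<forall>j<(n::nat). \<theta> j \<in> alt_forms sA 1"
    and ex: "\<forall>E. E = (\<Sum>j<n. sA (\<theta> j [E]) (e j))"
    using fgp unfolding fg_projective_def by blast
  define B0 where "B0 = (\<Sum>j<n. sA (R (\<theta> j) Es) (e j))"
  have B0: "W [B0] = R W Es" if W: "W \<in> alt_forms sA 1" for W
  proof -
    have exp: "W = (\<lambda>xs. \<Sum>j<n. W [e j] * \<theta> j xs)"
    proof
      fix xs :: "'a list"
      show "W xs = (\<Sum>j<n. W [e j] * \<theta> j xs)"
      proof (cases "length xs = 1")
        case True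
        then obtain E where xs: "xs = [E]" by (cases xs) auto
        have "W [E] = W [(\<Sum>j<n. sA (\<theta> j [E]) (e j))]" using ex by metis
        also have "\<dots> = (\<Sum>j<n. \<theta> j [E] * W [e j])"
          using W by (simp add: form1_sum form1_scale)
        finally show ?thesis using xs by (simp add: mult.commute)
      next
        case False
        have "W xs = 0" using W False by (simp add: form_zero_off)
        moreover have "(\<Sum>j<n. W [e j] * \<theta> j xs) = 0"
          by (rule sum.neutral) (use th False in \<open>auto simp: form_zero_off\<close>)
        ultimately show ?thesis by simp
      qed
    qed
    have "W [B0] = (\<Sum>j<n. R (\<theta> j) Es * W [e j])"
      unfolding B0_def using W by (simp add: form1_sum form1_scale)
    also have "\<dots> = R (\<lambda>xs. \<Sum>j<n. W [e j] * \<theta> j xs) Es"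
      using R_sum[of n \<theta> Es "\<lambda>j. W [e j]"] th len by (simp add: mult.commute)
    also have "\<dots> = R W Es" using exp by simp
    finally show ?thesis .
  qed
  have ex1: "\<exists>!B. \<forall>W\<in>alt_forms sA 1. W [B] = R W Es"
  proof
    show "\<forall>W\<in>alt_forms sA 1. W [B0] = R W Es" using B0 by blast
  next
    fix B assume "\<forall>W\<in>alt_forms sA 1. W [B] = R W Es"
    thus "B = B0" using B0 by (intro ext1) auto
  qed
  have "B_X sA D b Es = (THE B. \<forall>W\<in>alt_forms sA 1. W [B] = R W Es)"
    unfolding B_X_def R_def by simp
  thus ?thesis using theI'[OF ex1] by (simp only:)
qed

lemma BX_eq:
  assumes len: "length Es = b" and h: "\<And>W. W \<in> alt_forms sA 1 \<Longrightarrow> W [B] = R W Es"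
  shows "B_X sA D b Es = B"
  using BX_char[OF len] h by (intro ext1) auto

end

lemma nth_dl_pos: "i \<noteq> m \<Longrightarrow> m < length xs \<Longrightarrow> i < length xs \<Longrightarrow>
    dl i xs ! (if m < i then m else m - 1) = xs ! m"
  by (subst nth_dl) auto

lemma dl_split:
  assumes "p < q" "q < length Es"
  shows "dl p Es = take p Es @ take (q - p - 1) (drop (Suc p) Es) @ Es ! q # drop (Suc q) Es"
    and "dl q Es = take p Es @ Es ! p # take (q - p - 1) (drop (Suc p) Es) @ drop (Suc q) Es"
proof -
  have d: "drop (Suc p) Es = take (q - p - 1) (drop (Suc p) Es) @ Es ! q # drop (Suc q) Es"
  proof -
    have "drop (Suc p) Es = take (q - p - 1) (drop (Suc p) Es) @ drop (q - p - 1) (drop (Suc p) Es)"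
      by (rule append_take_drop_id[symmetric])
    also have "drop (q - p - 1) (drop (Suc p) Es) = drop q Es" using assms by simp
    also have "drop q Es = Es ! q # drop (Suc q) Es" using assms by (simp add: Cons_nth_drop_Suc)
    finally show ?thesis .
  qed
  show "dl p Es = take p Es @ take (q - p - 1) (drop (Suc p) Es) @ Es ! q # drop (Suc q) Es"
    using d by simp
  have "take q Es = take p Es @ take (q - p) (drop p Es)"
    using assms by (metis le_add_diff_inverse less_imp_le_nat take_add)
  also have "drop p Es = Es ! p # drop (Suc p) Es" using assms by (simp add: Cons_nth_drop_Suc)
  also have "take (q - p) (Es ! p # drop (Suc p) Es) = Es ! p # take (q - p - 1) (drop (Suc p) Es)"
    using assms by (cases "q - p") auto
  finally show "dl q Es = take p Es @ Es ! p # take (q - p - 1) (drop (Suc p) Es) @ drop (Suc q) Es"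
    by simp
qed

context VF
begin

definition gam :: "nat \<Rightarrow> 'r \<Rightarrow> 'a list \<Rightarrow> 'r" where
  "gam k r L = - ((- 1) ^ (b + 1) * (- 1) ^ (b - Suc k) * D 0 (const0 r) L)"

lemma D0c_in: "0 < b \<Longrightarrow> D 0 (const0 c) \<in> alt_forms sA (b - 1)"
  by (rule D0_in[OF const0_in])

lemma R_slot_add:
  assumes W: "W \<in> alt_forms sA 1" and len: "length Es = b" and k: "k < b"
  shows "R W (Es[k := x + y]) = R W (Es[k := x]) + R W (Es[k := y])"
proof -
  define T where "T z i = (- 1) ^ (b - Suc i) * D 0 (const0 (W [Es[k := z] ! i])) (dl i (Es[k := z]))"
    for z i
  have T: "T (x + y) i = T x i + T y i" if i: "i < b" for i
  proof (cases "i = k")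
    case True
    thus ?thesis unfolding T_def using len k
      by (simp add: form1_add[OF W] const0_add D_add[OF const0_in const0_in] algebra_simps)
  next
    case False
    let ?k' = "if k < i then k else k - 1"
    have k': "?k' < b - 1" using False i k by auto
    have ln: "length (dl i Es) = b - 1" using i len by simp
    have "D 0 (const0 (W [Es ! i])) ((dl i Es)[?k' := x + y])
        = D 0 (const0 (W [Es ! i])) ((dl i Es)[?k' := x]) + D 0 (const0 (W [Es ! i])) ((dl i Es)[?k' := y])"
      by (rule form_add[OF D0c_in ln k']) (use k in simp)
    thus ?thesis unfolding T_def using False len k i
      by (simp add: dl_update_other algebra_simps)
  qed
  have D1: "D 1 W (Es[k := x + y]) = D 1 W (Es[k := x]) + D 1 W (Es[k := y])"
    by (rule form_add[OF D1_in[OF W] len k])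
  have S: "(\<Sum>i<b. T (x + y) i) = (\<Sum>i<b. T x i) + (\<Sum>i<b. T y i)"
    using T by (simp add: sum.distrib[symmetric])
  show ?thesis unfolding R_def using D1 S unfolding T_def
    by (simp add: algebra_simps)
qed

lemma R_slot_scale:
  assumes W: "W \<in> alt_forms sA 1" and len: "length Es = b" and k: "k < b"
  shows "R W (Es[k := sA r x]) = r * R W (Es[k := x]) + gam k r (dl k Es) * W [x]"
proof -
  define T where "T z i = (- 1) ^ (b - Suc i) * D 0 (const0 (W [Es[k := z] ! i])) (dl i (Es[k := z]))"
    for z i
  have T: "T (sA r x) i = r * T x i +
      (if i = k then (- 1) ^ (b - Suc k) * D 0 (const0 r) (dl k Es) * W [x] else 0)"
    if i: "i < b" for i
  proof (cases "i = k")
    case True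
    have ln: "length (dl k Es) = b - 1" using k len by simp
    show ?thesis unfolding T_def using True len k
      by (simp add: form1_scale[OF W] D0_prod[OF ln] algebra_simps)
  next
    case False
    let ?k' = "if k < i then k else k - 1"
    have k': "?k' < b - 1" using False i k by auto
    have ln: "length (dl i Es) = b - 1" using i len by simp
    have "D 0 (const0 (W [Es ! i])) ((dl i Es)[?k' := sA r x])
        = r * D 0 (const0 (W [Es ! i])) ((dl i Es)[?k' := x])"
      by (rule form_scale[OF D0c_in ln k']) (use k in simp)
    thus ?thesis unfolding T_def using False len k i
      by (simp add: dl_update_other algebra_simps)
  qed
  have D1: "D 1 W (Es[k := sA r x]) = r * D 1 W (Es[k := x])"
    by (rule form_scale[OF D1_in[OF W] len k])
  have S: "(\<Sum>i<b. T (sA r x) i) = r * (\<Sum>i<b. T x i)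
       + (- 1) ^ (b - Suc k) * D 0 (const0 r) (dl k Es) * W [x]"
  proof -
    have "(\<Sum>i<b. T (sA r x) i) = (\<Sum>i<b. r * T x i +
      (if i = k then (- 1) ^ (b - Suc k) * D 0 (const0 r) (dl k Es) * W [x] else 0))"
      using T by simp
    also have "\<dots> = r * (\<Sum>i<b. T x i)
       + (- 1) ^ (b - Suc k) * D 0 (const0 r) (dl k Es) * W [x]"
      using k by (simp add: sum.distrib sum_distrib_left)
    finally show ?thesis .
  qed
  show ?thesis unfolding R_def gam_def using D1 S unfolding T_def
    by (simp add: algebra_simps)
qed

lemma BX_add:
  assumes len: "length Es = b" and k: "k < b"
  shows "B_X sA D b (Es[k := x + y]) = B_X sA D b (Es[k := x]) + B_X sA D b (Es[k := y])"
proof (rule BX_eq)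
  show "length (Es[k := x + y]) = b" using len by simp
  fix W assume W: "W \<in> alt_forms sA 1"
  have l1: "length (Es[k := x]) = b" "length (Es[k := y]) = b" using len by auto
  show "W [B_X sA D b (Es[k := x]) + B_X sA D b (Es[k := y])] = R W (Es[k := x + y])"
    using BX_char[OF l1(1)] BX_char[OF l1(2)] W
    by (simp add: form1_add R_slot_add[OF W len k])
qed

lemma BX_scale:
  assumes len: "length Es = b" and k: "k < b"
  shows "B_X sA D b (Es[k := sA r x]) = sA r (B_X sA D b (Es[k := x])) + sA (gam k r (dl k Es)) x"
proof (rule BX_eq)
  show "length (Es[k := sA r x]) = b" using len by simp
  fix W assume W: "W \<in> alt_forms sA 1"
  have l1: "length (Es[k := x]) = b" using len by auto
  show "W [sA r (B_X sA D b (Es[k := x])) + sA (gam k r (dl k Es)) x] = R W (Es[k := sA r x])"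
    using BX_char[OF l1] W
    by (simp add: form1_add form1_scale R_slot_scale[OF W len k])
qed

lemma BX_alt:
  assumes len: "length Es = b" and pq: "p < q" "q < b" and eq: "Es ! p = Es ! q"
  shows "B_X sA D b Es = 0"
proof (rule BX_eq[OF len])
  fix W assume W: "W \<in> alt_forms sA 1"
  define T where "T i = (- 1) ^ (b - Suc i) * D 0 (const0 (W [Es ! i])) (dl i Es)" for i
  have b0: "0 < b" using pq by simp
  have D1: "D 1 W Es = 0"
    using form_alt[OF D1_in[OF W]] len pq eq unfolding alternating_map_def by blast
  have T0: "T i = 0" if i: "i \<in> {..<b} - {p, q}" for i
  proof -
    let ?p' = "if p < i then p else p - 1"
    let ?q' = "if q < i then q else q - 1"
    have "?p' < ?q'" "?q' < b - 1" using i pq by auto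
    moreover have "dl i Es ! ?p' = dl i Es ! ?q'"
      using nth_dl_pos[of i p Es] nth_dl_pos[of i q Es] i pq len eq by auto
    moreover have "length (dl i Es) = b - 1" using i len by simp
    ultimately have "D 0 (const0 (W [Es ! i])) (dl i Es) = 0"
      using form_alt[OF D0c_in[OF b0]] unfolding alternating_map_def by blast
    thus ?thesis unfolding T_def by simp
  qed
  have "(\<Sum>i<b. T i) = (\<Sum>i\<in>{p, q}. T i)"
    by (rule sum.mono_neutral_right) (use pq T0 in auto)
  also have "\<dots> = T p + T q" using pq by simp
  also have "\<dots> = 0"
  proof -
    let ?\<omega> = "D 0 (const0 (W [Es ! p]))"
    let ?xs = "take p Es" and ?ys = "take (q - p - 1) (drop (Suc p) Es)" and ?zs = "drop (Suc q) Es"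
    have om: "?\<omega> \<in> alt_forms sA (b - 1)" by (rule D0c_in[OF b0])
    have lys: "length ?ys = q - p - 1" using pq len by simp
    have "?\<omega> (?xs @ Es ! p # ?ys @ ?zs) = (- 1) ^ length ?ys * ?\<omega> (?xs @ ?ys @ Es ! p # ?zs)"
      by (rule shift_anti[OF form_add[OF om] form_alt[OF om]]) (use pq len in auto)
    hence sh: "?\<omega> (dl q Es) = (- 1) ^ (q - p - 1) * ?\<omega> (dl p Es)"
      using dl_split[of p q Es] pq len eq lys by simp
    have ex: "b - Suc p = Suc ((b - Suc q) + (q - p - 1))" using pq by arith
    show ?thesis unfolding T_def using sh eq
      by (simp add: ex power_add)
  qed
  finally have "(\<Sum>i<b. T i) = 0" .
  thus "W [0] = R W Es" unfolding R_def using D1 form1_zero[OF W] unfolding T_def by simp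
qed

lemma BX_alternating: "alternating_map b (B_X sA D b)"
  unfolding alternating_map_def using BX_alt by blast

lemma BX_swap:
  assumes len: "length L = b" and ij: "i < j" "j < b"
  shows "B_X sA D b (L[i := x, j := y]) = - B_X sA D b (L[i := y, j := x])"
  by (rule swap_anti[OF BX_add BX_alternating len ij])

end

context VF
begin

lemma P_add: "P (x + y) = P x + P y"
  using hom unfolding module_hom_iff by blast

lemma P_scale: "P (sA r x) = sA r (P x)"
  using hom unfolding module_hom_iff by blast

lemma sA_add: "sA r (x + y) = sA r x + sA r y"
  using md by (rule module.scale_right_distrib)

lemma sA_ladd: "sA (r + s) x = sA r x + sA s x"
  using md by (rule module.scale_left_distrib)

lemma sA_sc: "sA r (sA s x) = sA (r * s) x"
  using md by (rule module.scale_scale)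

lemma sA_one: "sA 1 x = x"
  using md by (rule module.scale_one)

lemma sA_neg: "sA r (- x) = - sA r x"
  using md by (rule module.scale_minus_right)

lemma sA_zero: "sA r 0 = 0"
  using md by (rule module.scale_zero_right)

lemma sA_sum: "sA r (sum f A) = (\<Sum>x\<in>A. sA r (f x))"
  using md by (rule module.scale_sum_right)

lemma sA_comm: "sA r (sA s x) = sA s (sA r x)"
  by (simp add: sA_sc mult.commute)

lemma Pn_add: "(P ^^ n) (x + y) = (P ^^ n) x + (P ^^ n) y"
  by (induction n) (simp_all add: P_add)

lemma Pn_scale: "(P ^^ n) (sA r x) = sA r ((P ^^ n) x)"
  by (induction n) (simp_all add: P_scale)

lemma P0: "P 0 = 0"
  using P_scale[of 0 0] md by (simp add: module.scale_zero_left)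

lemma P_neg: "P (- x) = - P x"
proof -
  have "P (- x) + P x = P (- x + x)" by (rule P_add[symmetric])
  also have "\<dots> = 0" by (simp add: P0)
  finally show ?thesis by (simp add: eq_neg_iff_add_eq_0)
qed

lemma Pn_neg: "(P ^^ n) (- x) = - (P ^^ n) x"
  by (induction n) (simp_all add: P_neg)

lemma halve: "x + x = (0::'a) \<Longrightarrow> x = 0"
proof -
  assume h: "x + x = 0"
  have "x = sA (of_real (1/2) + of_real (1/2)) x"
    by (simp add: of_real_add[symmetric] sA_one)
  also have "\<dots> = sA (of_real (1/2)) (x + x)" unfolding sA_ladd sA_add ..
  also have "\<dots> = 0" using h by (simp add: sA_zero)
  finally show ?thesis .
qed

definition M :: "nat set \<Rightarrow> 'a list \<Rightarrow> 'a list" where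
  "M I Es = map (\<lambda>k. if k \<in> I then P (Es ! k) else Es ! k) [0..<b]"

definition t :: "nat set \<Rightarrow> 'a list \<Rightarrow> 'a" where
  "t I Es = sA ((- 1) ^ (b - card I)) ((P ^^ (b - card I)) (B_X sA D b (M I Es)))"

lemma Phi_eq: "Phi sA P D b Es = (\<Sum>I\<in>Pow {0..<b}. t I Es)"
  unfolding Phi_def t_def M_def ..

lemma length_M: "length (M I Es) = b"
  unfolding M_def by simp

lemma M_update: "length Es = b \<Longrightarrow> k < b \<Longrightarrow>
    M I (Es[k := z]) = (M I Es)[k := (if k \<in> I then P z else z)]"
  unfolding M_def by (rule nth_equalityI) (auto simp: nth_list_update)

lemma M_insert: "k < b \<Longrightarrow> M (insert k I) Es = (M I Es)[k := P (Es ! k)]"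
  unfolding M_def by (rule nth_equalityI) (auto simp: nth_list_update)

lemma t_add:
  assumes len: "length Es = b" and k: "k < b"
  shows "t I (Es[k := x + y]) = t I (Es[k := x]) + t I (Es[k := y])"
proof -
  have "B_X sA D b (M I (Es[k := x + y])) = B_X sA D b (M I (Es[k := x])) + B_X sA D b (M I (Es[k := y]))"
    unfolding M_update[OF len k] using BX_add[OF length_M k] by (simp add: P_add)
  thus ?thesis unfolding t_def by (simp add: Pn_add sA_add)
qed

definition ex :: "nat \<Rightarrow> 'r \<Rightarrow> 'a \<Rightarrow> nat set \<Rightarrow> 'a list \<Rightarrow> 'a" where
  "ex k r x I Es = sA ((- 1) ^ (b - card I))
      ((P ^^ (b - card I)) (sA (gam k r (dl k (M I Es))) (if k \<in> I then P x else x)))"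

lemma t_scale:
  assumes len: "length Es = b" and k: "k < b"
  shows "t I (Es[k := sA r x]) = sA r (t I (Es[k := x])) + ex k r x I Es"
proof -
  have "B_X sA D b (M I (Es[k := sA r x])) = sA r (B_X sA D b (M I (Es[k := x])))
      + sA (gam k r (dl k (M I Es))) (if k \<in> I then P x else x)"
    unfolding M_update[OF len k] using BX_scale[OF length_M k, of I Es r]
    by (simp add: P_scale)
  thus ?thesis unfolding t_def ex_def by (simp add: Pn_add Pn_scale sA_add sA_sc mult_ac)
qed

lemma ex_sum:
  assumes len: "length Es = b" and k: "k < b"
  shows "(\<Sum>I\<in>Pow {0..<b}. ex k r x I Es) = 0"
proof -
  define A where "A = {0..<b} - {k}"
  have kA: "k \<notin> A" and iA: "insert k A = {0..<b}" using k unfolding A_def by auto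
  have fA: "finite A" unfolding A_def by simp
  have cA: "card A = b - 1" unfolding A_def using k by simp
  have "(\<Sum>I\<in>Pow {0..<b}. ex k r x I Es)
      = (\<Sum>I\<in>Pow A. ex k r x I Es) + (\<Sum>I\<in>insert k ` Pow A. ex k r x I Es)"
    unfolding iA[symmetric] Pow_insert
    by (rule sum.union_disjoint) (use fA kA in auto)
  also have "(\<Sum>I\<in>insert k ` Pow A. ex k r x I Es) = (\<Sum>I\<in>Pow A. ex k r x (insert k I) Es)"
  proof (rule sum.reindex[unfolded comp_def])
    show "inj_on (insert k) (Pow A)" using kA by (auto intro!: inj_onI simp: insert_ident)
  qed
  also have "(\<Sum>I\<in>Pow A. ex k r x I Es) + (\<Sum>I\<in>Pow A. ex k r x (insert k I) Es)
      = (\<Sum>I\<in>Pow A. ex k r x I Es + ex k r x (insert k I) Es)"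
    by (simp add: sum.distrib)
  also have "\<dots> = 0"
  proof (rule sum.neutral, rule ballI)
    fix I assume I: "I \<in> Pow A"
    have kI: "k \<notin> I" using I kA by auto
    have fI: "finite I" using I fA finite_subset by auto
    have "card I \<le> card A" using I fA by (simp add: card_mono)
    hence cI: "card I < b" using cA k by simp
    define n where "n = b - card I - 1"
    have n1: "b - card I = Suc n" unfolding n_def using cI by simp
    have n2: "b - card (insert k I) = n" unfolding n_def using kI fI by simp
    have gm: "dl k (M (insert k I) Es) = dl k (M I Es)"
      unfolding M_insert[OF k] by simp
    let ?g = "gam k r (dl k (M I Es))"
    let ?V = "sA ?g ((P ^^ Suc n) x)"
    have e1: "ex k r x I Es = sA ((- 1) ^ Suc n) ((P ^^ Suc n) (sA ?g x))"
      unfolding ex_def n1 by (simp only: kI if_False)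
    have e2: "ex k r x (insert k I) Es = sA ((- 1) ^ n) ((P ^^ n) (sA ?g (P x)))"
      unfolding ex_def n2 gm by (simp only: insert_iff simp_thms if_True)
    have v1: "(P ^^ Suc n) (sA ?g x) = ?V" by (rule Pn_scale)
    have v2: "(P ^^ n) (sA ?g (P x)) = ?V"
      unfolding Pn_scale funpow_Suc_right comp_def ..
    have "ex k r x I Es + ex k r x (insert k I) Es = sA ((- 1) ^ Suc n + (- 1) ^ n) ?V"
      unfolding e1 e2 v1 v2 sA_ladd ..
    also have "(- 1) ^ Suc n + (- 1) ^ n = (0::'r)" by simp
    finally show "ex k r x I Es + ex k r x (insert k I) Es = 0"
      using md by (simp add: module.scale_zero_left)
  qed
  finally show ?thesis by simp
qed

lemma Phi_add:
  assumes len: "length Es = b" and k: "k < b"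
  shows "Phi sA P D b (Es[k := x + y]) = Phi sA P D b (Es[k := x]) + Phi sA P D b (Es[k := y])"
  unfolding Phi_eq by (simp add: t_add[OF len k] sum.distrib)

lemma Phi_scale:
  assumes len: "length Es = b" and k: "k < b"
  shows "Phi sA P D b (Es[k := sA r x]) = sA r (Phi sA P D b (Es[k := x]))"
  unfolding Phi_eq
  by (simp add: t_scale[OF len k] sum.distrib ex_sum[OF len k] sA_sum)

definition sw :: "nat \<Rightarrow> nat \<Rightarrow> nat \<Rightarrow> nat" where
  "sw i j m = (if m = i then j else if m = j then i else m)"

lemma sw_sw: "sw i j (sw i j m) = m"
  unfolding sw_def by auto

lemma sw_img_img: "sw i j ` sw i j ` I = I"
  by (simp add: image_image sw_sw)

lemma mem_sw: "(m \<in> sw i j ` I) = (sw i j m \<in> I)"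
  by (metis image_iff sw_sw)

lemma t_swap:
  assumes len: "length Es = b" and ij: "i < j" "j < b" and eq: "Es ! i = Es ! j"
  shows "t (sw i j ` I) Es = - t I Es"
proof -
  have inj: "inj (sw i j)" by (metis injI sw_sw)
  have c: "card (sw i j ` I) = card I" by (rule card_image) (rule inj_on_subset[OF inj], simp)
  let ?L = "M I Es"
  have Ms: "M (sw i j ` I) Es = ?L[i := ?L ! j, j := ?L ! i]"
    unfolding M_def
    by (rule nth_equalityI) (use ij eq in \<open>auto simp: nth_list_update mem_sw sw_def\<close>)
  have "B_X sA D b (M (sw i j ` I) Es) = - B_X sA D b (?L[i := ?L ! i, j := ?L ! j])"
    unfolding Ms by (rule BX_swap[OF length_M ij])
  hence "B_X sA D b (M (sw i j ` I) Es) = - B_X sA D b ?L" by simp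
  thus ?thesis unfolding t_def c by (simp add: Pn_neg sA_neg)
qed

lemma Phi_alt:
  assumes len: "length Es = b" and ij: "i < j" "j < b" and eq: "Es ! i = Es ! j"
  shows "Phi sA P D b Es = 0"
proof -
  let ?S = "\<Sum>I\<in>Pow {0..<b}. t I Es"
  have "?S = (\<Sum>I\<in>Pow {0..<b}. t (sw i j ` I) Es)"
  proof (rule sum.reindex_bij_witness[of _ "\<lambda>I. sw i j ` I" "\<lambda>I. sw i j ` I"])
    fix I assume "I \<in> Pow {0..<b}"
    thus "sw i j ` I \<in> Pow {0..<b}" using ij by (auto simp: sw_def)
  next
    fix I assume "I \<in> Pow {0..<b}"
    thus "sw i j ` I \<in> Pow {0..<b}" using ij by (auto simp: sw_def)
  qed (simp_all add: sw_img_img)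
  also have "\<dots> = - ?S" by (simp add: t_swap[OF len ij eq] sum_negf)
  finally have "?S + ?S = 0" by (simp add: eq_neg_iff_add_eq_0)
  hence "?S = 0" by (rule halve)
  thus ?thesis unfolding Phi_eq .
qed

end

theorem proposition14p4:
  fixes sA :: "'r::{comm_ring_1,real_algebra_1} \<Rightarrow> 'a::ab_group_add \<Rightarrow> 'a"
    and P :: "'a \<Rightarrow> 'a"
    and D :: "nat \<Rightarrow> ('a list \<Rightarrow> 'r) \<Rightarrow> ('a list \<Rightarrow> 'r)"
    and b :: nat
  assumes "module sA"
    and "fg_projective sA"
    and "module_hom sA sA P"
    and "vector_field sA (int b - 1) D"
  shows "multilinear_map sA sA b (Phi sA P D b) \<and> alternating_map b (Phi sA P D b)"
proof -
  interpret VF sA P D b by (rule VF.intro) (use assms in auto)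
  show ?thesis
    unfolding multilinear_map_def alternating_map_def
    using Phi_add Phi_scale Phi_alt by blast
qed

end
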